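(* Let $T(x,z,t)=\sum_{n\ge0}\Theta_n(z,t)x^n$, with $\Theta_0=1$. (i) For the weights $a_j=1$ for all $j$, as formal power series in $x,z$, \[ T(x,z,t)=\frac{1-zt}{(1-zt)(1-x)-zx}. \] (ii) For the weights $a_j=1/j$, for complex $z,t$ with $zt\notin\{1,2,3,\dots\}$, as a formal power series in $x$, \[ T(x,z,t)={}_2F_1\big(1,\,1+z(1-t);\,1-zt;\,x\big)=\sum_{n\ge0}\frac{(1+z(1-t))_n}{(1-zt)_n}x^n, \] where $(c)_n=c(c+1)\cdots(c+n-1)$.
   Context: Let $\boldsymbol a=(a_j)_{j\ge1}$ be a sequence of positive reals. For $\vec\ell=(\ell_1,\dots,\ell_k)$ with $n\ge\ell_1\ge\cdots\ge\ell_k\ge1$ let $\sigma(\vec\ell)=|\{1\le j\le k-1:\ell_j=\ell_{j+1}\}|$ and $w(\vec\ell)=\prod_j a_{\ell_j}$. Let $\theta_{n;k}(t)=\sum_{n\ge\ell_1\ge\cdots\ge\ell_k\ge1}w(\vec\ell)t^{\sigma(\vec\ell)}$ ($\theta_{n;0}=1$) and $\Theta_n(z,t)=\sum_{k\ge0}\theta_{n;k}(t)z^k$ (so $\Theta_0=1$). *)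

theory Defs
  imports Complex_Main "HOL-Computational_Algebra.Formal_Power_Series"
begin

definition seqs :: "nat \<Rightarrow> nat \<Rightarrow> nat list set" where
  "seqs n k = {xs. length xs = k \<and> sorted_wrt (\<ge>) xs \<and> set xs \<subseteq> {1..n}}"

definition sigma :: "nat list \<Rightarrow> nat" where
  "sigma xs = card {j. Suc j < length xs \<and> xs ! j = xs ! Suc j}"

definition weight :: "(nat \<Rightarrow> 'a::comm_monoid_mult) \<Rightarrow> nat list \<Rightarrow> 'a" where
  "weight a xs = prod_list (map a xs)"

definition theta :: "(nat \<Rightarrow> 'a::comm_ring_1) \<Rightarrow> nat \<Rightarrow> nat \<Rightarrow> 'a \<Rightarrow> 'a" where
  "theta a n k t = (\<Sum>xs\<in>seqs n k. weight a xs * t ^ sigma xs)"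

definition Theta :: "(nat \<Rightarrow> 'a::comm_ring_1) \<Rightarrow> nat \<Rightarrow> 'a \<Rightarrow> 'a fps" where
  "Theta a n t = Abs_fps (\<lambda>k. theta a n k t)"

text \<open>T(x,z,t) as a formal power series in x whose coefficients are formal power series in z.\<close>
definition Tser :: "(nat \<Rightarrow> 'a::comm_ring_1) \<Rightarrow> 'a \<Rightarrow> 'a fps fps" where
  "Tser a t = Abs_fps (\<lambda>n. Theta a n t)"

end

theory Submission
  imports Defs
begin

fun sig :: "nat list \<Rightarrow> nat" where
  "sig (x # y # ys) = (if x = y then 1 else 0) + sig (y # ys)"
| "sig _ = 0"

lemma sigma_sig: "sigma xs = sig xs"
proof (induction xs rule: sig.induct)
  case (1 x y ys)
  have eq: "{j. Suc j < length (x#y#ys) \<and> (x#y#ys) ! j = (x#y#ys) ! Suc j}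
    = {j. j = 0 \<and> x = y} \<union> Suc ` {j. Suc j < length (y#ys) \<and> (y#ys) ! j = (y#ys) ! Suc j}"
    (is "?A = ?B \<union> Suc ` ?C")
  proof (rule set_eqI)
    fix j show "j \<in> ?A \<longleftrightarrow> j \<in> ?B \<union> Suc ` ?C"
      by (cases j) auto
  qed
  have fin: "finite ?C" by (rule finite_subset[of _ "{..<length (y#ys)}"]) auto
  have "card ?A = card ?B + card (Suc ` ?C)"
    unfolding eq by (rule card_Un_disjoint) (use fin in auto)
  also have "card (Suc ` ?C) = card ?C" by (rule card_image) auto
  also have "card ?B = (if x = y then 1 else 0)" by auto
  finally show ?case using 1 by (simp add: sigma_def)
qed (auto simp: sigma_def)

lemma seqs_0: "seqs n 0 = {[]}" by (auto simp: seqs_def)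
lemma seqs_zero_n: "seqs 0 k = (if k = 0 then {[]} else {})" by (auto simp: seqs_def)

lemma finite_seqs: "finite (seqs n k)"
proof -
  have "seqs n k \<subseteq> {xs. set xs \<subseteq> {1..n} \<and> length xs = k}" by (auto simp: seqs_def)
  moreover have "finite {xs. set xs \<subseteq> {1..n} \<and> length xs = k}"
    by (rule finite_lists_length_eq) auto
  ultimately show ?thesis by (rule finite_subset)
qed

lemma theta_0: "theta a n 0 t = 1"
  by (simp add: theta_def seqs_0 weight_def sigma_def)

lemma theta_zero_n: "theta a 0 k t = (if k = 0 then 1 else 0)"
  by (simp add: theta_def seqs_zero_n weight_def sigma_def)

lemma seqs_Suc_Suc: "seqs (Suc m) (Suc k) = seqs m (Suc k) \<union> Cons (Suc m) ` seqs (Suc m) k"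
proof (rule set_eqI)
  fix xs show "xs \<in> seqs (Suc m) (Suc k) \<longleftrightarrow> xs \<in> seqs m (Suc k) \<union> Cons (Suc m) ` seqs (Suc m) k"
  proof (cases xs)
    case Nil then show ?thesis by (auto simp: seqs_def)
  next
    case (Cons x ys)
    show ?thesis
    proof (cases "x = Suc m")
      case True then show ?thesis using Cons by (auto simp: seqs_def)
    next
      case False
      have "xs \<notin> Cons (Suc m) ` seqs (Suc m) k" using Cons False by auto
      moreover have "xs \<in> seqs (Suc m) (Suc k) \<longleftrightarrow> xs \<in> seqs m (Suc k)"
      proof
        assume h: "xs \<in> seqs (Suc m) (Suc k)"
        then have "x \<le> m" using Cons False by (auto simp: seqs_def)
        moreover have "\<forall>y\<in>set ys. y \<le> x" using h Cons by (auto simp: seqs_def)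
        ultimately show "xs \<in> seqs m (Suc k)" using h Cons by (fastforce simp: seqs_def subset_iff)
      qed (auto simp: seqs_def)
      ultimately show ?thesis by blast
    qed
  qed
qed

lemma seqs_diff_hd:
  assumes "ys \<in> seqs (Suc m) k" "ys \<notin> seqs m k"
  shows "\<exists>zs. ys = Suc m # zs"
proof (cases ys)
  case Nil then show ?thesis using assms by (auto simp: seqs_def)
next
  case (Cons x zs)
  have "Suc m \<in> set ys"
  proof (rule ccontr)
    assume "Suc m \<notin> set ys"
    then have "set ys \<subseteq> {1..m}" using assms(1) by (auto simp: seqs_def subset_iff le_Suc_eq)
    then show False using assms by (auto simp: seqs_def)
  qed
  then have "x = Suc m" using assms Cons by (auto simp: seqs_def)
  then show ?thesis using Cons by auto
qed

lemma seqs_mono: "seqs m k \<subseteq> seqs (Suc m) k" by (auto simp: seqs_def)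

lemma theta_rec:
  "theta a (Suc m) (Suc k) t = theta a m (Suc k) t
     + a (Suc m) * (theta a m k t + t * (theta a (Suc m) k t - theta a m k t))"
proof -
  let ?f = "\<lambda>xs. weight a xs * t ^ sigma xs"
  have disj: "seqs m (Suc k) \<inter> Cons (Suc m) ` seqs (Suc m) k = {}"
    by (auto simp: seqs_def)
  have "theta a (Suc m) (Suc k) t = theta a m (Suc k) t + sum ?f (Cons (Suc m) ` seqs (Suc m) k)"
    unfolding theta_def seqs_Suc_Suc
    by (rule sum.union_disjoint) (auto simp: finite_seqs disj)
  also have "sum ?f (Cons (Suc m) ` seqs (Suc m) k) = sum (?f \<circ> Cons (Suc m)) (seqs (Suc m) k)"
    by (rule sum.reindex) auto
  also have "\<dots> = sum (?f \<circ> Cons (Suc m)) (seqs m k) + sum (?f \<circ> Cons (Suc m)) (seqs (Suc m) k - seqs m k)"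
    using sum.subset_diff[OF seqs_mono finite_seqs, of "?f \<circ> Cons (Suc m)" m k] by (simp add: add.commute)
  also have "sum (?f \<circ> Cons (Suc m)) (seqs m k) = a (Suc m) * theta a m k t"
    unfolding theta_def sum_distrib_left
  proof (rule sum.cong[OF refl])
    fix ys assume "ys \<in> seqs m k"
    then have "sig (Suc m # ys) = sig ys"
      by (cases ys) (auto simp: seqs_def)
    then show "(?f \<circ> Cons (Suc m)) ys = a (Suc m) * ?f ys"
      by (simp add: sigma_sig weight_def)
  qed
  also have "sum (?f \<circ> Cons (Suc m)) (seqs (Suc m) k - seqs m k)
      = a (Suc m) * t * sum ?f (seqs (Suc m) k - seqs m k)"
    unfolding sum_distrib_left
  proof (rule sum.cong[OF refl])
    fix ys assume "ys \<in> seqs (Suc m) k - seqs m k"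
    then obtain zs where "ys = Suc m # zs" using seqs_diff_hd by blast
    then have "sig (Suc m # ys) = Suc (sig ys)" by simp
    then show "(?f \<circ> Cons (Suc m)) ys = a (Suc m) * t * ?f ys"
      by (simp add: sigma_sig weight_def)
  qed
  also have "sum ?f (seqs (Suc m) k - seqs m k) = theta a (Suc m) k t - theta a m k t"
    unfolding theta_def using sum.subset_diff[OF seqs_mono finite_seqs, of ?f m k]
    by (simp add: algebra_simps)
  finally show ?thesis by (simp add: algebra_simps)
qed

lemma Theta_zero: "Theta a 0 t = 1"
  by (rule fps_ext) (simp add: Theta_def theta_zero_n)

lemma Theta_step:
  fixes a :: "nat \<Rightarrow> 'a::comm_ring_1"
  shows "Theta a (Suc m) t * (1 - fps_const (a (Suc m) * t) * fps_X)
       = Theta a m t * (1 - fps_const (a (Suc m) * t) * fps_X + fps_const (a (Suc m)) * fps_X)"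
proof -
  have e1: "\<And>(f::'a fps) c. f * (1 - fps_const c * fps_X) = f - fps_const c * (fps_X * f)"
    by (simp add: algebra_simps)
  have e2: "\<And>(f::'a fps) c d. f * (1 - fps_const c * fps_X + fps_const d * fps_X) = f - fps_const c * (fps_X * f) + fps_const d * (fps_X * f)"
    by (simp add: algebra_simps)
  show ?thesis unfolding e1 e2
  proof (rule fps_ext)
    fix n show "fps_nth (Theta a (Suc m) t - fps_const (a (Suc m) * t) * (fps_X * Theta a (Suc m) t)) n =
      fps_nth (Theta a m t - fps_const (a (Suc m) * t) * (fps_X * Theta a m t) + fps_const (a (Suc m)) * (fps_X * Theta a m t)) n"
    proof (cases n)
      case 0 then show ?thesis by (simp add: Theta_def theta_0)
    next
      case (Suc k) then show ?thesis by (simp add: Theta_def theta_rec algebra_simps)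
    qed
  qed
qed

lemma part1:
  fixes t :: complex
  shows "Tser (\<lambda>j. 1) t *
           ((1 - fps_const (fps_const t * fps_X)) * (1 - fps_X) - fps_const fps_X * fps_X)
         = fps_const (1 - fps_const t * fps_X)"
proof -
  define D :: "complex fps" where "D = 1 - fps_const t * fps_X"
  define N :: "complex fps" where "N = D + fps_X"
  have step: "\<And>m. Theta (\<lambda>j. 1) (Suc m) t * D = Theta (\<lambda>j. 1) m t * N"
    using Theta_step[of "\<lambda>j. (1::complex)"] by (simp add: D_def N_def)
  have fac: "(1 - fps_const (fps_const t * fps_X)) * (1 - fps_X) - fps_const fps_X * fps_X
      = fps_const D - fps_X * fps_const N"
    by (simp add: D_def N_def algebra_simps flip: fps_const_add fps_const_mult fps_const_neg fps_const_sub)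
  show ?thesis unfolding fac
  proof (rule fps_ext)
    fix n
    show "fps_nth (Tser (\<lambda>j. 1) t * (fps_const D - fps_X * fps_const N)) n
       = fps_nth (fps_const (1 - fps_const t * fps_X)) n"
    proof (cases n)
      case 0 then show ?thesis by (simp add: Tser_def Theta_zero D_def)
    next
      case (Suc m)
      have "Tser (\<lambda>j. 1) t * (fps_const D - fps_X * fps_const N)
          = Tser (\<lambda>j. 1) t * fps_const D - fps_X * Tser (\<lambda>j. 1) t * fps_const N"
        by (simp add: algebra_simps)
      then show ?thesis using Suc step[of m] by (simp add: Tser_def mult.assoc)
    qed
  qed
qed

lemma poch_nth0: "fps_nth (pochhammer (f :: 'a::comm_ring_1 fps) n) 0 = pochhammer (fps_nth f 0) n"
  by (induction n) (simp_all add: pochhammer_Suc)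

lemma part2:
  fixes t :: complex
  shows "Tser (\<lambda>j. 1 / of_nat j) t =
           Abs_fps (\<lambda>n. pochhammer (1 + fps_const (1 - t) * fps_X) n
                         / pochhammer (1 - fps_const t * fps_X) n)"
proof -
  let ?a = "\<lambda>j. 1 / of_nat j :: complex"
  define PD where "PD = pochhammer (1 - fps_const t * fps_X)"
  define PN where "PN = pochhammer (1 + fps_const (1 - t) * fps_X)"
  have key: "Theta ?a n t * PD n = PN n" for n
  proof (induction n)
    case 0 then show ?case by (simp add: Theta_zero PD_def PN_def)
  next
    case (Suc m)
    define C :: "complex fps" where "C = fps_const (of_nat (Suc m))"
    define Dm where "Dm = 1 - fps_const (?a (Suc m) * t) * fps_X"
    define Nm where "Nm = 1 - fps_const (?a (Suc m) * t) * fps_X + fps_const (?a (Suc m)) * fps_X"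
    have st: "Theta ?a (Suc m) t * Dm = Theta ?a m t * Nm"
      unfolding Dm_def Nm_def by (rule Theta_step)
    have c: "of_nat (Suc m) * (?a (Suc m) * t) = t"
      by (simp del: of_nat_Suc)
    have C1: "C = 1 + of_nat m" by (simp add: C_def fps_of_nat[symmetric] fps_const_add[symmetric])
    have "C * Dm = C - fps_const (of_nat (Suc m) * (?a (Suc m) * t)) * fps_X"
      unfolding Dm_def C_def by (simp only: right_diff_distrib mult_1_right fps_const_mult[symmetric] mult.assoc)
    then have hD: "1 - fps_const t * fps_X + of_nat m = C * Dm"
      unfolding c C1 by simp
    have c2: "of_nat (Suc m) * ?a (Suc m) = 1"
      by (simp del: of_nat_Suc)
    have "C * Nm = C * Dm + fps_const (of_nat (Suc m) * ?a (Suc m)) * fps_X"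
      unfolding Nm_def Dm_def C_def by (simp only: distrib_left fps_const_mult[symmetric] mult.assoc)
    also have "\<dots> = (1 - fps_const t * fps_X + of_nat m) + fps_X" unfolding c2 hD by simp
    also have "\<dots> = 1 + fps_const (1 - t) * fps_X + of_nat m"
      by (simp add: algebra_simps flip: fps_const_sub)
    finally have hN: "1 + fps_const (1 - t) * fps_X + of_nat m = C * Nm" by simp
    have "Theta ?a (Suc m) t * PD (Suc m) = C * (Theta ?a (Suc m) t * Dm) * PD m"
      unfolding PD_def pochhammer_Suc hD by (simp only: ac_simps)
    also have "\<dots> = (Theta ?a m t * PD m) * (C * Nm)"
      unfolding st by (simp only: ac_simps)
    also have "\<dots> = PN (Suc m)"
      unfolding PN_def pochhammer_Suc hN[symmetric] using Suc.IH by (simp add: PN_def)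
    finally show ?case .
  qed
  have nz: "fps_nth (PD n) 0 \<noteq> 0" for n
    by (simp add: PD_def poch_nth0 pochhammer_fact[symmetric])
  show ?thesis unfolding PN_def[symmetric] PD_def[symmetric]
  proof (rule fps_ext)
    fix n
    have "PN n / PD n = Theta ?a n t * (PD n * inverse (PD n))"
      by (simp add: fps_divide_unit nz key[symmetric] mult.assoc)
    also have "\<dots> = Theta ?a n t" using inverse_mult_eq_1'[OF nz] by simp
    finally show "fps_nth (Tser ?a t) n = fps_nth (Abs_fps (\<lambda>n. PN n / PD n)) n"
      by (simp add: Tser_def)
  qed
qed

theorem mainTheorem8:
  fixes t :: complex
  shows "(Tser (\<lambda>j. 1) t *
           ((1 - fps_const (fps_const t * fps_X)) * (1 - fps_X) - fps_const fps_X * fps_X)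
         = fps_const (1 - fps_const t * fps_X)) \<and>
         Tser (\<lambda>j. 1 / of_nat j) t =
           Abs_fps (\<lambda>n. pochhammer (1 + fps_const (1 - t) * fps_X) n
                         / pochhammer (1 - fps_const t * fps_X) n)"
  using part1 part2 by blast

end
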